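(* Let $\kappa$ be an uncountable regular cardinal, let $\mathcal{I}$ be a $\kappa$-complete proper ideal on $\kappa$ containing every bounded subset of $\kappa$, and let $\nu\in\{2,\kappa\}$. Then the space ${}^{\kappa}\nu\times{}^{\kappa}\kappa$ with the product topology $\tau_{\mathcal{I}}\times\tau_{\mathcal{I}}$ is homeomorphic to $({}^{\kappa}\kappa,\tau_{\mathcal{I}})$.
   Context: For $\mu\in\{2,\kappa\}$, ${}^{\kappa}\mu$ is the set of functions $\kappa\to\mu$; for $f\colon D\to\mu$ with $D\in\mathcal{I}$, $\mathbf{N}_f=\{x\in{}^{\kappa}\mu: f\subseteq x\}$, and $\tau_{\mathcal{I}}$ on ${}^{\kappa}\mu$ is the topology generated by these sets. *)

theory Defs
  imports "HOL-Analysis.Analysis"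
begin

text \<open>The cardinal kappa is represented by a cardinal well-order r on a type 'k
  with Field r = UNIV (card_order r); elements of 'k are the ordinals below kappa.\<close>

definition bounded_in :: "'k rel \<Rightarrow> 'k set \<Rightarrow> bool" where
  "bounded_in r A \<longleftrightarrow> (\<exists>\<beta>. \<forall>\<alpha>\<in>A. (\<alpha>, \<beta>) \<in> r)"

definition kappa_complete_ideal :: "'k rel \<Rightarrow> 'k set set \<Rightarrow> bool" where
  "kappa_complete_ideal r I \<longleftrightarrow>
     {} \<in> I \<and>
     (\<forall>A B. A \<in> I \<and> B \<subseteq> A \<longrightarrow> B \<in> I) \<and>
     (\<forall>A B. A \<in> I \<and> B \<in> I \<longrightarrow> A \<union> B \<in> I) \<and>
     (\<forall>F. F \<subseteq> I \<and> (card_of F, r) \<in> ordLess \<longrightarrow> \<Union>F \<in> I)"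

definition proper_ideal :: "'k set set \<Rightarrow> bool" where
  "proper_ideal I \<longleftrightarrow> UNIV \<notin> I"

text \<open>N_f for f : D \<rightarrow> mu, D \<in> I (f given as a total function, only its values on D matter).\<close>
definition basic_nbhd :: "'k set \<Rightarrow> ('k \<Rightarrow> 'm) \<Rightarrow> ('k \<Rightarrow> 'm) set" where
  "basic_nbhd D f = {x. \<forall>\<alpha>\<in>D. x \<alpha> = f \<alpha>}"

definition tauI :: "'k set set \<Rightarrow> ('k \<Rightarrow> 'm) topology" where
  "tauI I = topology_generated_by {basic_nbhd D f | D f. D \<in> I}"

end

theory Submission
  imports Defs
begin

lemma tauI_topspace: "{} \<in> I \<Longrightarrow> topspace (tauI I) = UNIV"
  unfolding tauI_def topology_generated_by_topspace
  by (auto simp: basic_nbhd_def)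

lemma tauI_basic: "D \<in> I \<Longrightarrow> openin (tauI I) (basic_nbhd D f)"
  unfolding tauI_def by (rule topology_generated_by_Basis) blast

lemma cont_tauI:
  assumes "{} \<in> I" "\<And>D g. D \<in> I \<Longrightarrow> openin X (f -` basic_nbhd D g \<inter> topspace X)"
  shows "continuous_map X (tauI I) f"
  unfolding tauI_def
  by (rule continuous_on_generated_topo) (use assms in \<open>auto simp: basic_nbhd_def\<close>)

lemma main_homeo:
  fixes p :: "'m \<times> 'k \<Rightarrow> 'k" and I :: "'k set set"
  assumes bp: "bij p" and e: "{} \<in> I"
  shows "prod_topology (tauI I :: ('k \<Rightarrow> 'm) topology) (tauI I :: ('k \<Rightarrow> 'k) topology)
           homeomorphic_space (tauI I :: ('k \<Rightarrow> 'k) topology)"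
proof -
  define q where "q = inv p"
  have qp: "\<And>u. q (p u) = u" using bp unfolding q_def by (simp add: bij_is_inj)
  have pq: "\<And>v. p (q v) = v" using bp unfolding q_def by (simp add: bij_is_surj surj_f_inv_f)
  have peq: "\<And>u v. p u = v \<longleftrightarrow> u = q v" using qp pq by metis
  define h :: "('k \<Rightarrow> 'm) \<times> ('k \<Rightarrow> 'k) \<Rightarrow> ('k \<Rightarrow> 'k)"
    where "h = (\<lambda>(x,y). \<lambda>a. p (x a, y a))"
  define g :: "('k \<Rightarrow> 'k) \<Rightarrow> ('k \<Rightarrow> 'm) \<times> ('k \<Rightarrow> 'k)"
    where "g = (\<lambda>z. (\<lambda>a. fst (q (z a)), \<lambda>a. snd (q (z a))))"
  have ts1: "topspace (tauI I :: ('k \<Rightarrow> 'm) topology) = UNIV" using e by (rule tauI_topspace)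
  have ts2: "topspace (tauI I :: ('k \<Rightarrow> 'k) topology) = UNIV" using e by (rule tauI_topspace)
  have c1: "continuous_map (prod_topology (tauI I :: ('k \<Rightarrow> 'm) topology) (tauI I :: ('k \<Rightarrow> 'k) topology)) (tauI I) h"
  proof (rule cont_tauI[OF e])
    fix D and f :: "'k \<Rightarrow> 'k" assume D: "D \<in> I"
    have "h -` basic_nbhd D f \<inter> topspace (prod_topology (tauI I :: ('k \<Rightarrow> 'm) topology) (tauI I :: ('k \<Rightarrow> 'k) topology))
       = basic_nbhd D (\<lambda>a. fst (q (f a))) \<times> basic_nbhd D (\<lambda>a. snd (q (f a)))"
      unfolding h_def basic_nbhd_def ts1 ts2 topspace_prod_topology
      by (auto simp: peq prod_eq_iff)
    moreover have "openin (prod_topology (tauI I :: ('k \<Rightarrow> 'm) topology) (tauI I :: ('k \<Rightarrow> 'k) topology))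
       (basic_nbhd D (\<lambda>a. fst (q (f a))) \<times> basic_nbhd D (\<lambda>a. snd (q (f a))))"
      unfolding openin_prod_Times_iff using tauI_basic[OF D, of "\<lambda>a. fst (q (f a))"] tauI_basic[OF D, of "\<lambda>a. snd (q (f a))"] by blast
    ultimately show "openin (prod_topology (tauI I :: ('k \<Rightarrow> 'm) topology) (tauI I :: ('k \<Rightarrow> 'k) topology))
        (h -` basic_nbhd D f \<inter> topspace (prod_topology (tauI I :: ('k \<Rightarrow> 'm) topology) (tauI I :: ('k \<Rightarrow> 'k) topology)))"
      by (simp only:)
  qed
  have gen: "continuous_map (tauI I :: ('k \<Rightarrow> 'k) topology) (tauI I :: ('k \<Rightarrow> 'n) topology) (\<lambda>z a. c (z a))"
    for c :: "'k \<Rightarrow> 'n"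
  proof (rule cont_tauI[OF e])
    fix D and f :: "'k \<Rightarrow> 'n" assume D: "D \<in> I"
    show "openin (tauI I) ((\<lambda>z a. c (z a)) -` basic_nbhd D f \<inter> topspace (tauI I))"
    proof (subst openin_subopen, intro ballI)
      fix z assume z: "z \<in> (\<lambda>z a. c (z a)) -` basic_nbhd D f \<inter> topspace (tauI I)"
      show "\<exists>T. openin (tauI I) T \<and> z \<in> T \<and> T \<subseteq> (\<lambda>z a. c (z a)) -` basic_nbhd D f \<inter> topspace (tauI I)"
        apply (rule exI[of _ "basic_nbhd D z"])
        using z D tauI_basic[OF D, of z] unfolding ts2 basic_nbhd_def by auto
    qed
  qed
  have c2: "continuous_map (tauI I) (prod_topology (tauI I :: ('k \<Rightarrow> 'm) topology) (tauI I :: ('k \<Rightarrow> 'k) topology)) g"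
    unfolding continuous_map_pairwise
    using gen[of "\<lambda>v. fst (q v)"] gen[of "\<lambda>v. snd (q v)"] by (simp add: g_def o_def)
  have "homeomorphic_maps (prod_topology (tauI I :: ('k \<Rightarrow> 'm) topology) (tauI I :: ('k \<Rightarrow> 'k) topology)) (tauI I) h g"
    unfolding homeomorphic_maps_def using c1 c2
    by (auto simp: g_def h_def qp pq)
  then show ?thesis unfolding homeomorphic_space_def by blast
qed

theorem proposition2p6:
  fixes r :: "'k rel" and I :: "'k set set"
  assumes "card_order r"
    and "\<not> countable (UNIV :: 'k set)"
    and "regularCard r"
    and "kappa_complete_ideal r I"
    and "proper_ideal I"
    and "\<forall>A. bounded_in r A \<longrightarrow> A \<in> I"
  shows "(prod_topology (tauI I :: ('k \<Rightarrow> bool) topology) (tauI I :: ('k \<Rightarrow> 'k) topology))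
           homeomorphic_space (tauI I :: ('k \<Rightarrow> 'k) topology)
       \<and> (prod_topology (tauI I :: ('k \<Rightarrow> 'k) topology) (tauI I :: ('k \<Rightarrow> 'k) topology))
           homeomorphic_space (tauI I :: ('k \<Rightarrow> 'k) topology)"
proof -
  have e: "{} \<in> I" using assms(4) unfolding kappa_complete_ideal_def by blast
  have inf: "infinite (UNIV :: 'k set)" using assms(2) countable_finite by blast
  have "(card_of (UNIV :: bool set), card_of (UNIV :: 'k set)) \<in> ordLeq"
  proof -
    have "\<exists>a b::'k. a \<noteq> b"
    proof (rule ccontr)
      assume "\<not> (\<exists>a b::'k. a \<noteq> b)"
      then have "(UNIV :: 'k set) = {undefined}" by auto
      then show False using inf by (metis finite.emptyI finite_insert)
    qed
    then obtain a b :: 'k where ab: "a \<noteq> b" by blast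
    have "inj_on (\<lambda>t. if t then a else b) UNIV" using ab by (auto simp: inj_on_def split: if_splits)
    then show ?thesis using card_of_ordLeq by blast
  qed
  then have "(card_of ((UNIV :: bool set) \<times> (UNIV :: 'k set)), card_of (UNIV :: 'k set)) \<in> ordIso"
    using inf card_of_Times_infinite by blast
  then obtain p1 :: "bool \<times> 'k \<Rightarrow> 'k" where p1: "bij p1"
    using card_of_ordIso by (metis UNIV_Times_UNIV)
  have "(card_of ((UNIV :: 'k set) \<times> (UNIV :: 'k set)), card_of (UNIV :: 'k set)) \<in> ordIso"
    using inf card_of_Times_same_infinite by blast
  then obtain p2 :: "'k \<times> 'k \<Rightarrow> 'k" where p2: "bij p2"
    using card_of_ordIso by (metis UNIV_Times_UNIV)
  show ?thesis using main_homeo[OF p1 e] main_homeo[OF p2 e] by blast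
qed

end
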